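(* Let $m\ge n$, $B\in\mathbb R^{n\times m}$ of full row rank, $f,h$ convex and continuously differentiable with Lipschitz gradients, $\mathcal L(u,p)=f(u)-h(p)+(Bu,p)$ with saddle point $(u^*,p^* )$, and $T_{\mathcal U},\mathcal I_{\mathcal V}$ ($m\times m$), $T_{\mathcal P},\mathcal I_{\mathcal Q}$ ($n\times n$) symmetric positive definite. Suppose $h\in\mathcal S^{1,1}_{\mu_{h,T_{\mathcal P}},L_{h,T_{\mathcal P}}}$ w.r.t. $T_{\mathcal P}$ with $L_{h,T_{\mathcal P}}\le1$, $f\in\mathcal S^{1,1}_{\mu_{f,T_{\mathcal U}},L_{f,T_{\mathcal U}}}$ w.r.t. $T_{\mathcal U}$ with $L_{f,T_{\mathcal U}}\le1$, $f_B$ is strongly convex w.r.t. $\mathcal I_{\mathcal V}$ with $\mu_{f_B,\mathcal I_{\mathcal V}}>0$, and $h_B$ is strongly convex w.r.t. $\mathcal I_{\mathcal Q}$ with $\mu_{h_B,\mathcal I_{\mathcal Q}}>0$. Let $(u_k,p_k)$ be generated from $(u_0,p_0)$ by $$u_{k+1/2}=u_k-T_{\mathcal U}^{-1}(\nabla f(u_k)+B^\top p_k),\qquad p_{k+1}=p_k-\alpha_k\mathcal I_{\mathcal Q}^{-1}(\nabla h(p_k)-Bu_{k+1/2}),$$ where $u_{k+1}$ is any point with $\|\nabla\tilde f_B(u_{k+1};u_k,p_{k+1})\|^2_{\mathcal I_{\mathcal V}^{-1}}\le\epsilon_k$ for $k=0,1,2,\dots$, and $\tilde f_B(u;u_k,p_{k+1})=f_B(u)+\frac1{2\alpha_k}\|u-u_k+\alpha_k\mathcal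 I_{\mathcal V}^{-1}B^\top(p_{k+1}-T_{\mathcal P}^{-1}\nabla h(p_{k+1}))\|^2_{\mathcal I_{\mathcal V}}$. Then for $0<\alpha_k<\mu_{h_B,\mathcal I_{\mathcal Q}}/L_{S,\mathcal Q}^2$ and $\mu_k=\min\{\mu_{f_B,\mathcal I_{\mathcal V}}/2,\ \mu_{h_B,\mathcal I_{\mathcal Q}}-\alpha_kL_{S,\mathcal Q}^2\}$, $$\mathcal E(u_{k+1},p_{k+1})\le\frac1{1+\alpha_k\mu_k}\mathcal E(u_k,p_k)+\frac{2\alpha_k}{(1+\alpha_k\mu_k)\mu_{f_B,\mathcal I_{\mathcal V}}}\epsilon_k,$$ where $L_{S,\mathcal Q}^2=L_{h_B,\mathcal I_{\mathcal Q}}^2+L_{e_{\mathcal U},\mathcal I_{\mathcal V}}^2L_S^2$. In particular, for $\alpha_k=\mu_{h_B,\mathcal I_{\mathcal Q}}/(2L_{S,\mathcal Q}^2)$, $$\mathcal E(u_{n+1},p_{n+1})\le\rho^{n+1}\mathcal E(u_0,p_0)+\frac{\mu_{h_B,\mathcal I_{\mathcal Q}}}{\mu_{f_B,\mathcal I_{\mathcal V}}L_{S,\mathcal Q}^2}\sum_{k=0}^n\rho^{n-k+1}\epsilon_k,$$ where $\mu=\min\{\mu_{f_B,\mathcal I_{\mathcal V}},\mu_{h_B,\mathcal I_{\mathcal Q}}\}$ and $\rho=1/(1+\mu_{h_B,\mathcal I_{\mathcal Q}}\mu/(4L_{S,\mathcal Q}^2))\in(0,1)$.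
   Context: A saddle point satisfies $\nabla f(u^* )+B^\top p^*=0$, $Bu^*=\nabla h(p^* )$. For SPD $M$, $\|x\|_M=(Mx,x)^{1/2}$; $D_g(y,x)=g(y)-g(x)-(\nabla g(x),y-x)$; $g\in\mathcal S^{1,1}_{\mu_{g,M},L_{g,M}}$ w.r.t. $M$ means $\frac{\mu_{g,M}}2\|x-y\|_M^2\le D_g(y,x)\le\frac{L_{g,M}}2\|x-y\|_M^2$ for all $x,y$. Define $f_B(u)=f(u)+\frac12(B^\top T_{\mathcal P}^{-1}Bu,u)$, $h_B(p)=h(p)+\frac12(BT_{\mathcal U}^{-1}B^\top p,p)$, $e_{\mathcal U}(u)=u-T_{\mathcal U}^{-1}\nabla f(u)$, $\mathcal E(u,p)=\frac12\|u-u^*\|^2_{\mathcal I_{\mathcal V}}+\frac12\|p-p^*\|^2_{\mathcal I_{\mathcal Q}}$; $L_{h_B,\mathcal I_{\mathcal Q}}$ is the Lipschitz constant of $\nabla h_B$ (dual norm $\|\cdot\|_{\mathcal I_{\mathcal Q}^{-1}}$ vs $\|\cdot\|_{\mathcal I_{\mathcal Q}}$), $L_{e_{\mathcal U},\mathcal I_{\mathcal V}}$ the Lipschitz constant of $e_{\mathcal U}$ in $\|\cdot\|_{\mathcal I_{\mathcal V}}$, $L_S^2=\lambda_{\max}(\mathcal I_{\mathcal Q}^{-1}B\mathcal I_{\mathcal V}^{-1}B^\top)$. *)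

theory Defs
  imports "HOL-Analysis.Analysis"
begin

definition spd :: "real^'n^'n \<Rightarrow> bool" where
  "spd M \<longleftrightarrow> transpose M = M \<and> (\<forall>x. x \<noteq> 0 \<longrightarrow> 0 < x \<bullet> (M *v x))"

definition mnorm :: "real^'n^'n \<Rightarrow> real^'n \<Rightarrow> real" where
  "mnorm M x = sqrt (x \<bullet> (M *v x))"

definition bregman :: "(real^'n \<Rightarrow> real) \<Rightarrow> (real^'n \<Rightarrow> real^'n) \<Rightarrow> real^'n \<Rightarrow> real^'n \<Rightarrow> real" where
  "bregman g dg y x = g y - g x - dg x \<bullet> (y - x)"

definition S11 :: "(real^'n \<Rightarrow> real) \<Rightarrow> (real^'n \<Rightarrow> real^'n) \<Rightarrow> real^'n^'n \<Rightarrow> real \<Rightarrow> real \<Rightarrow> bool" where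
  "S11 g dg M mu L \<longleftrightarrow> (\<forall>x y. mu / 2 * (mnorm M (x - y))^2 \<le> bregman g dg y x
                              \<and> bregman g dg y x \<le> L / 2 * (mnorm M (x - y))^2)"

definition strongly_convex_wrt :: "real^'n^'n \<Rightarrow> real \<Rightarrow> (real^'n \<Rightarrow> real) \<Rightarrow> bool" where
  "strongly_convex_wrt M mu g \<longleftrightarrow> convex_on UNIV (\<lambda>x. g x - mu / 2 * (mnorm M x)^2)"

definition lambda_max :: "real^'n^'n \<Rightarrow> real" where
  "lambda_max A = Sup {lam. \<exists>x. x \<noteq> 0 \<and> A *v x = lam *\<^sub>R x}"

definition fB :: "(real^'m \<Rightarrow> real) \<Rightarrow> real^'m^'n \<Rightarrow> real^'n^'n \<Rightarrow> real^'m \<Rightarrow> real" where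
  "fB f B TP u = f u + 1/2 * (((transpose B ** matrix_inv TP ** B) *v u) \<bullet> u)"

definition hB :: "(real^'n \<Rightarrow> real) \<Rightarrow> real^'m^'n \<Rightarrow> real^'m^'m \<Rightarrow> real^'n \<Rightarrow> real" where
  "hB h B TU p = h p + 1/2 * (((B ** matrix_inv TU ** transpose B) *v p) \<bullet> p)"

definition eU :: "(real^'m \<Rightarrow> real^'m) \<Rightarrow> real^'m^'m \<Rightarrow> real^'m \<Rightarrow> real^'m" where
  "eU gf TU u = u - matrix_inv TU *v gf u"

definition energy :: "real^'m^'m \<Rightarrow> real^'n^'n \<Rightarrow> real^'m \<Rightarrow> real^'n \<Rightarrow> real^'m \<Rightarrow> real^'n \<Rightarrow> real" where
  "energy IV IQ us ps u p = 1/2 * (mnorm IV (u - us))^2 + 1/2 * (mnorm IQ (p - ps))^2"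

definition fBtilde :: "(real^'m \<Rightarrow> real) \<Rightarrow> (real^'n \<Rightarrow> real^'n) \<Rightarrow> real^'m^'n \<Rightarrow> real^'n^'n \<Rightarrow> real^'m^'m
     \<Rightarrow> real \<Rightarrow> real^'m \<Rightarrow> real^'n \<Rightarrow> real^'m \<Rightarrow> real" where
  "fBtilde f gh B TP IV alpha uk pk1 u =
     fB f B TP u + 1 / (2 * alpha) *
       (mnorm IV (u - uk + alpha *\<^sub>R (matrix_inv IV *v (transpose B *v (pk1 - matrix_inv TP *v gh pk1)))))^2"

end

theory Submission
  imports Defs
begin


lemma inner_mv: "((A::real^'n^'m) *v x) \<bullet> y = x \<bullet> (transpose A *v y)"
  by (metis dot_lmul_matrix vector_transpose_matrix)

lemma inner_mv_sym: "transpose (A::real^'n^'n) = A \<Longrightarrow> (A *v x) \<bullet> y = x \<bullet> (A *v y)"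
  using inner_mv[of A x y] by simp

lemma spd_invertible: assumes "spd M" shows "invertible M"
proof -
  have "\<forall>x. M *v x = 0 \<longrightarrow> x = 0"
    using assms unfolding spd_def by (metis inner_zero_right less_irrefl)
  then obtain B where "B ** M = mat 1" using matrix_left_invertible_ker by blast
  then have "M ** B = mat 1" using matrix_left_right_inverse by blast
  then show ?thesis using \<open>B ** M = mat 1\<close> by (auto simp: invertible_def)
qed

lemma inv_props:
  assumes "invertible (M::real^'n^'n)"
  shows "M ** matrix_inv M = mat 1" "matrix_inv M ** M = mat 1"
    "M *v (matrix_inv M *v x) = x" "matrix_inv M *v (M *v x) = x"
proof -
  have "M ** matrix_inv M = mat 1 \<and> matrix_inv M ** M = mat 1"
    using assms unfolding invertible_def matrix_inv_def by (rule someI_ex)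
  then show 1: "M ** matrix_inv M = mat 1" and 2: "matrix_inv M ** M = mat 1" by auto
  show "M *v (matrix_inv M *v x) = x" by (simp add: matrix_vector_mul_assoc 1)
  show "matrix_inv M *v (M *v x) = x" by (simp add: matrix_vector_mul_assoc 2)
qed

lemma inv_sym:
  assumes "invertible (M::real^'n^'n)" "transpose M = M"
  shows "transpose (matrix_inv M) = matrix_inv M"
proof -
  have "transpose (matrix_inv M) ** M = mat 1"
    using inv_props(1)[OF assms(1)] assms(2) by (metis matrix_transpose_mul transpose_mat)
  then have "transpose (matrix_inv M) ** (M ** matrix_inv M) = matrix_inv M"
    by (simp add: matrix_mul_assoc)
  then show ?thesis using inv_props(1)[OF assms(1)] by simp
qed

lemma spd_nonneg: "spd M \<Longrightarrow> 0 \<le> x \<bullet> (M *v x)"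
  unfolding spd_def by (cases "x = 0") (auto intro: less_imp_le)

lemma spd_inv: assumes "spd M" shows "spd (matrix_inv M)"
proof -
  have inv: "invertible M" using spd_invertible[OF assms] .
  have sym: "transpose M = M" using assms spd_def by blast
  have "0 < x \<bullet> (matrix_inv M *v x)" if "x \<noteq> 0" for x
  proof -
    define z where "z = matrix_inv M *v x"
    have xz: "x = M *v z" using inv_props(3)[OF inv] z_def by simp
    then have "z \<noteq> 0" using that by auto
    then have "0 < z \<bullet> (M *v z)" using assms spd_def by blast
    also have "z \<bullet> (M *v z) = x \<bullet> (matrix_inv M *v x)"
      by (simp add: xz z_def[symmetric] inv_props(4)[OF inv] inner_commute)
    finally show ?thesis .
  qed
  then show ?thesis unfolding spd_def using inv_sym[OF inv sym] by blast
qed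

lemma mnorm_sq: "spd M \<Longrightarrow> (mnorm M x)^2 = x \<bullet> (M *v x)"
  unfolding mnorm_def using spd_nonneg by simp

lemma mnorm_nonneg: "spd M \<Longrightarrow> 0 \<le> mnorm M x"
  unfolding mnorm_def using spd_nonneg by simp

lemma psd_cs:
  fixes S :: "real^'n^'n"
  assumes sym: "transpose S = S" and psd: "\<And>x. 0 \<le> x \<bullet> (S *v x)"
  shows "(x \<bullet> (S *v y))^2 \<le> (x \<bullet> (S *v x)) * (y \<bullet> (S *v y))"
proof -
  define a where "a = y \<bullet> (S *v y)"
  define b where "b = x \<bullet> (S *v y)"
  define c where "c = x \<bullet> (S *v x)"
  have yx: "y \<bullet> (S *v x) = b" unfolding b_def
    using inner_mv_sym[OF sym, of y x] by (simp add: inner_commute)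
  have q: "0 \<le> c + 2 * t * b + t^2 * a" for t
  proof -
    have "0 \<le> (x + t *\<^sub>R y) \<bullet> (S *v (x + t *\<^sub>R y))" by (rule psd)
    also have "\<dots> = c + 2 * t * b + t^2 * a"
      using yx by (simp add: a_def b_def c_def algebra_simps inner_add_left inner_add_right
          matrix_vector_mult_scaleR power2_eq_square)
    finally show ?thesis .
  qed
  have "b^2 \<le> c * a"
  proof (cases "a = 0")
    case True
    have "b = 0"
    proof (rule ccontr)
      assume "b \<noteq> 0"
      have "0 \<le> c + 2 * (-(c + 1) / (2 * b)) * b" using q[of "-(c+1)/(2*b)"] True by simp
      also have "\<dots> = -1" using \<open>b \<noteq> 0\<close> by (simp add: field_simps)
      finally show False by simp
    qed
    then show ?thesis using True by simp
  next
    case False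
    then have apos: "a > 0" using psd[of y] a_def by simp
    have "0 \<le> c + 2 * (-b/a) * b + (-b/a)^2 * a" by (rule q)
    also have "\<dots> = c - b^2 / a" using apos by (simp add: field_simps power2_eq_square)
    finally show ?thesis using apos by (simp add: field_simps mult.commute)
  qed
  then show ?thesis by (simp add: a_def b_def c_def mult.commute)
qed

lemma psd_cs_abs:
  fixes S :: "real^'n^'n"
  assumes "transpose S = S" "\<And>x. 0 \<le> x \<bullet> (S *v x)"
  shows "\<bar>x \<bullet> (S *v y)\<bar> \<le> sqrt (x \<bullet> (S *v x)) * sqrt (y \<bullet> (S *v y))"
proof -
  have "sqrt ((x \<bullet> (S *v y))^2) \<le> sqrt ((x \<bullet> (S *v x)) * (y \<bullet> (S *v y)))"
    using psd_cs[OF assms] real_sqrt_le_mono by blast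
  then show ?thesis by (simp add: real_sqrt_mult)
qed

lemma spd_cs:
  assumes "spd M"
  shows "\<bar>a \<bullet> b\<bar> \<le> mnorm (matrix_inv M) a * mnorm M b"
proof -
  have inv: "invertible M" using spd_invertible[OF assms] .
  have sym: "transpose M = M" using assms spd_def by blast
  define z where "z = matrix_inv M *v a"
  have az: "a = M *v z" using inv_props(3)[OF inv] z_def by simp
  have "a \<bullet> b = z \<bullet> (M *v b)" using inner_mv_sym[OF sym] az by simp
  moreover have "z \<bullet> (M *v z) = a \<bullet> (matrix_inv M *v a)"
    by (simp add: az z_def[symmetric] inv_props(4)[OF inv] inner_commute)
  ultimately show ?thesis
    using psd_cs_abs[OF sym spd_nonneg[OF assms], of z b] unfolding mnorm_def by simp
qed

lemma spd_cs': "spd M \<Longrightarrow> \<bar>a \<bullet> b\<bar> \<le> mnorm M a * mnorm (matrix_inv M) b"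
  using spd_cs[of M b a] by (simp add: inner_commute mult.commute)




lemma mv_deriv: "((\<lambda>x. (K::real^'n^'m) *v x) has_derivative (\<lambda>v. K *v v)) F"
  by (rule bounded_linear_imp_has_derivative) (rule matrix_vector_mul_bounded_linear)

lemma quad_deriv:
  assumes sym: "transpose (M::real^'n^'n) = M"
  shows "((\<lambda>x. x \<bullet> (M *v x)) has_derivative (\<lambda>v. (2 *\<^sub>R (M *v x)) \<bullet> v)) (at x)"
proof -
  have "((\<lambda>x. x \<bullet> (M *v x)) has_derivative (\<lambda>v. x \<bullet> (M *v v) + v \<bullet> (M *v x))) (at x)"
    by (rule has_derivative_inner[OF has_derivative_ident mv_deriv])
  moreover have "(\<lambda>v. x \<bullet> (M *v v) + v \<bullet> (M *v x)) = (\<lambda>v. (2 *\<^sub>R (M *v x)) \<bullet> v)"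
    using inner_mv_sym[OF sym] by (auto simp: fun_eq_iff inner_commute algebra_simps)
  ultimately show ?thesis by (rule has_derivative_eq_rhs)
qed

lemma convex_tangent:
  fixes \<phi> :: "'a::real_normed_vector \<Rightarrow> real"
  assumes cv: "convex_on UNIV \<phi>" and der: "(\<phi> has_derivative D) (at x)"
  shows "\<phi> x + D (y - x) \<le> \<phi> y"
proof -
  define d where "d = y - x"
  define g where "g t = \<phi> (x + t *\<^sub>R d)" for t :: real
  have lin: "linear D" using der has_derivative_linear by blast
  have "((\<lambda>t. x + t *\<^sub>R d) has_derivative (\<lambda>s. s *\<^sub>R d)) (at 0)"
    by (auto intro!: derivative_eq_intros)
  moreover have "(\<phi> has_derivative D) (at (x + 0 *\<^sub>R d))" using der by simp
  ultimately have "(g has_derivative (\<lambda>s. D (s *\<^sub>R d))) (at 0)"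
    unfolding g_def by (rule has_derivative_compose)
  moreover have "(\<lambda>s. D (s *\<^sub>R d)) = (\<lambda>s. D d * s)"
    using lin by (simp add: linear_scale mult.commute)
  ultimately have "(g has_real_derivative D d) (at 0)"
    by (simp add: has_field_derivative_def)
  then have "((\<lambda>h. (g (0 + h) - g 0) / h) \<longlongrightarrow> D d) (at 0)"
    using DERIV_def by blast
  then have lim: "((\<lambda>h. (g h - g 0) / h) \<longlongrightarrow> D d) (at_right 0)"
    by (simp add: filterlim_at_split)
  have ev: "\<forall>\<^sub>F h in at_right 0. (g h - g 0) / h \<le> \<phi> y - \<phi> x"
  proof -
    have "\<forall>\<^sub>F h in at_right (0::real). 0 < h \<and> h < 1"
      unfolding eventually_at_right_field by (rule exI[of _ 1]) simp
    then show ?thesis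
    proof (rule eventually_mono)
      fix h :: real assume h: "0 < h \<and> h < 1"
      have "\<phi> ((1 - h) *\<^sub>R x + h *\<^sub>R y) \<le> (1 - h) * \<phi> x + h * \<phi> y"
        using convex_onD[OF cv, of h x y] h by simp
      moreover have "(1 - h) *\<^sub>R x + h *\<^sub>R y = x + h *\<^sub>R d"
        by (simp add: d_def algebra_simps)
      ultimately have "g h - g 0 \<le> h * (\<phi> y - \<phi> x)"
        by (simp add: g_def algebra_simps)
      then show "(g h - g 0) / h \<le> \<phi> y - \<phi> x"
        using h by (simp add: divide_le_eq mult.commute)
    qed
  qed
  have "D d \<le> \<phi> y - \<phi> x"
    using tendsto_le[OF _ tendsto_const lim ev] by simp
  then show ?thesis by (simp add: d_def)
qed

lemma convex_monotone:
  fixes \<phi> :: "real^'n \<Rightarrow> real"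
  assumes cv: "convex_on UNIV \<phi>" and der: "\<And>x. (\<phi> has_derivative (\<lambda>v. G x \<bullet> v)) (at x)"
  shows "0 \<le> (G y - G x) \<bullet> (y - x)"
proof -
  have "\<phi> x + G x \<bullet> (y - x) \<le> \<phi> y" using convex_tangent[OF cv der] .
  moreover have "\<phi> y + G y \<bullet> (x - y) \<le> \<phi> x" using convex_tangent[OF cv der] .
  moreover have "G y \<bullet> (x - y) = - (G y \<bullet> (y - x))"
    by (metis inner_minus_right minus_diff_eq)
  moreover have "(G y - G x) \<bullet> (y - x) = G y \<bullet> (y - x) - G x \<bullet> (y - x)"
    by (rule inner_diff_left)
  ultimately show ?thesis by linarith
qed

lemma strong_monotone:
  fixes g :: "real^'n \<Rightarrow> real"
  assumes spd: "spd M" and sc: "strongly_convex_wrt M mu g"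
    and der: "\<And>x. (g has_derivative (\<lambda>v. G x \<bullet> v)) (at x)"
  shows "mu * ((y - x) \<bullet> (M *v (y - x))) \<le> (G y - G x) \<bullet> (y - x)"
proof -
  have sym: "transpose M = M" using spd spd_def by blast
  have eq: "(\<lambda>x. g x - mu / 2 * (mnorm M x)^2) = (\<lambda>x. g x - mu / 2 * (x \<bullet> (M *v x)))"
    using mnorm_sq[OF spd] by simp
  have cv: "convex_on UNIV (\<lambda>x. g x - mu / 2 * (x \<bullet> (M *v x)))"
    using sc unfolding strongly_convex_wrt_def eq .
  have d: "((\<lambda>x. g x - mu / 2 * (x \<bullet> (M *v x))) has_derivative
     (\<lambda>v. (G x - mu *\<^sub>R (M *v x)) \<bullet> v)) (at x)" for x
  proof -
    have "((\<lambda>x. g x - mu / 2 * (x \<bullet> (M *v x))) has_derivative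
     (\<lambda>v. G x \<bullet> v - mu / 2 * ((2 *\<^sub>R (M *v x)) \<bullet> v))) (at x)"
      by (intro has_derivative_diff der has_derivative_mult_right quad_deriv sym)
    then show ?thesis
      by (rule has_derivative_eq_rhs) (auto simp: fun_eq_iff inner_diff_left)
  qed
  have "0 \<le> ((G y - mu *\<^sub>R (M *v y)) - (G x - mu *\<^sub>R (M *v x))) \<bullet> (y - x)"
    by (rule convex_monotone[OF cv d])
  moreover have "(G y - mu *\<^sub>R (M *v y)) - (G x - mu *\<^sub>R (M *v x)) = (G y - G x) - mu *\<^sub>R (M *v (y - x))"
    by (simp add: matrix_vector_mult_diff_distrib scaleR_right_diff_distrib)
  moreover have "((G y - G x) - mu *\<^sub>R (M *v (y - x))) \<bullet> (y - x) = (G y - G x) \<bullet> (y - x) - mu * ((y - x) \<bullet> (M *v (y - x)))"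
    using inner_diff_left[of "G y - G x" "mu *\<^sub>R (M *v (y - x))" "y - x"]
    by (simp add: inner_commute[of "M *v (y - x)" "y - x"])
  ultimately show ?thesis by (metis diff_ge_0_iff_ge)
qed

lemma cocoercive_half:
  fixes h :: "real^'n \<Rightarrow> real"
  assumes spd: "spd M" and cv: "convex_on UNIV h"
    and der: "\<And>x. (h has_derivative (\<lambda>v. gh x \<bullet> v)) (at x)"
    and S: "S11 h gh M mu L" and L: "L \<le> 1"
  shows "1/2 * ((gh y - gh x) \<bullet> (matrix_inv M *v (gh y - gh x))) \<le> bregman h gh y x"
proof -
  have inv: "invertible M" using spd_invertible[OF spd] .
  have sym: "transpose M = M" using spd spd_def by blast
  define w where "w = gh y - gh x"
  define z where "z = y - matrix_inv M *v w"
  have t1: "h x + gh x \<bullet> (z - x) \<le> h z" using convex_tangent[OF cv der] .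
  have "bregman h gh z y \<le> L / 2 * (mnorm M (y - z))^2" using S unfolding S11_def by blast
  also have "(mnorm M (y - z))^2 = w \<bullet> (matrix_inv M *v w)"
    unfolding mnorm_sq[OF spd] z_def by (simp add: inv_props(3)[OF inv] inner_commute)
  also have "L / 2 * (w \<bullet> (matrix_inv M *v w)) \<le> 1/2 * (w \<bullet> (matrix_inv M *v w))"
    using spd_nonneg[OF spd_inv[OF spd], of w] L by (intro mult_right_mono) auto
  finally have t2: "h z \<le> h y + gh y \<bullet> (z - y) + 1/2 * (w \<bullet> (matrix_inv M *v w))"
    unfolding bregman_def by simp
  have e0: "gh y \<bullet> (matrix_inv M *v w) - gh x \<bullet> (matrix_inv M *v w) = w \<bullet> (matrix_inv M *v w)"
    by (simp add: w_def inner_diff_left)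
  have e1: "gh x \<bullet> (z - x) = gh x \<bullet> (y - x) - gh x \<bullet> (matrix_inv M *v w)"
    unfolding z_def by (simp add: inner_diff_right)
  have e2: "gh y \<bullet> (z - y) = - (gh y \<bullet> (matrix_inv M *v w))"
    unfolding z_def by (simp add: inner_diff_right)
  have "1/2 * (w \<bullet> (matrix_inv M *v w)) \<le> h y - h x - gh x \<bullet> (y - x)"
    using t1 t2 e0 e1 e2 by linarith
  then show ?thesis unfolding bregman_def w_def .
qed

lemma quad_neg: "(-v) \<bullet> ((A::real^'n^'n) *v (-v)) = v \<bullet> (A *v v)"
proof -
  have "A *v (-v) = -(A *v v)"
    by (metis diff_0 matrix_vector_mult_0_right matrix_vector_mult_diff_distrib)
  then show ?thesis by simp
qed

lemma cocoercive:
  fixes h :: "real^'n \<Rightarrow> real"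
  assumes spd: "spd M" and cv: "convex_on UNIV h"
    and der: "\<And>x. (h has_derivative (\<lambda>v. gh x \<bullet> v)) (at x)"
    and S: "S11 h gh M mu L" and L: "L \<le> 1"
  shows "(gh y - gh x) \<bullet> (matrix_inv M *v (gh y - gh x)) \<le> (gh y - gh x) \<bullet> (y - x)"
proof -
  have a: "1/2 * ((gh y - gh x) \<bullet> (matrix_inv M *v (gh y - gh x))) \<le> bregman h gh y x"
    by (rule cocoercive_half[OF assms])
  have b: "1/2 * ((gh x - gh y) \<bullet> (matrix_inv M *v (gh x - gh y))) \<le> bregman h gh x y"
    by (rule cocoercive_half[OF assms])
  have c: "(gh x - gh y) \<bullet> (matrix_inv M *v (gh x - gh y)) = (gh y - gh x) \<bullet> (matrix_inv M *v (gh y - gh x))"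
    using quad_neg[of "gh y - gh x" "matrix_inv M"] by simp
  have e1: "gh y \<bullet> (x - y) = - (gh y \<bullet> (y - x))"
    by (metis inner_minus_right minus_diff_eq)
  have e: "gh x \<bullet> (y - x) + gh y \<bullet> (x - y) = - ((gh y - gh x) \<bullet> (y - x))"
    unfolding e1 inner_diff_left by simp
  show ?thesis using a b c e unfolding bregman_def by linarith
qed




lemma quad_nonpos:
  fixes c d :: real
  assumes h: "\<And>t. 2 * t * c + t^2 * d \<le> 0"
  shows "c = 0"
proof -
  define t where "t = c / (\<bar>d\<bar> + 1)"
  have p: "\<bar>d\<bar> + 1 > 0" by simp
  have gen: "p > 0 \<Longrightarrow> p^2 * (2 * (c/p) * c + (c/p)^2 * d) = c^2 * (2 * p + d)" for p :: real
    by (simp add: field_simps power2_eq_square)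
  have "(\<bar>d\<bar> + 1)^2 * (2 * t * c + t^2 * d) = c^2 * (2 * (\<bar>d\<bar> + 1) + d)"
    unfolding t_def by (rule gen[OF p])
  moreover have "(\<bar>d\<bar> + 1)^2 * (2 * t * c + t^2 * d) \<le> 0"
    using h[of t] p by (simp add: mult_nonneg_nonpos)
  ultimately have "c^2 * (2 * (\<bar>d\<bar> + 1) + d) \<le> 0" by simp
  moreover have "2 * (\<bar>d\<bar> + 1) + d > 0" by (cases "d \<ge> 0") auto
  ultimately have "c^2 \<le> 0" by (simp add: mult_le_0_iff)
  then show ?thesis by simp
qed

lemma quad_expand:
  assumes sym: "transpose (A::real^'n^'n) = A"
  shows "(a + t *\<^sub>R b) \<bullet> (A *v (a + t *\<^sub>R b)) = a \<bullet> (A *v a) + 2 * t * ((A *v a) \<bullet> b) + t^2 * (b \<bullet> (A *v b))"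
proof -
  have "b \<bullet> (A *v a) = (A *v a) \<bullet> b" by (simp add: inner_commute)
  moreover have "a \<bullet> (A *v b) = (A *v a) \<bullet> b" using inner_mv_sym[OF sym] by simp
  ultimately show ?thesis
    by (simp add: inner_add_left inner_add_right matrix_vector_right_distrib
        matrix_vector_mult_scaleR power2_eq_square algebra_simps)
qed

lemma spectral:
  fixes K Q :: "real^'n^'n"
  assumes symK: "transpose K = K" and psdK: "\<And>x. 0 \<le> x \<bullet> (K *v x)" and spdQ: "spd Q"
  shows "0 \<le> lambda_max (matrix_inv Q ** K) \<and>
         (\<forall>x. x \<bullet> (K *v x) \<le> lambda_max (matrix_inv Q ** K) * (x \<bullet> (Q *v x)))"
proof -
  define N where "N x = x \<bullet> (K *v x)" for x
  define D where "D x = x \<bullet> (Q *v x)" for x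
  have invQ: "invertible Q" using spd_invertible[OF spdQ] .
  have symQ: "transpose Q = Q" using spdQ spd_def by blast
  have Dpos: "x \<noteq> 0 \<Longrightarrow> 0 < D x" for x using spdQ unfolding spd_def D_def by blast
  define S where "S = sphere (0::real^'n) 1"
  obtain e :: "real^'n" where e: "norm e = 1" using vector_choose_size[of 1] by auto
  have Sne: "S \<noteq> {}" using e unfolding S_def by auto
  have S0: "x \<in> S \<Longrightarrow> x \<noteq> 0" for x unfolding S_def by auto
  have cK: "continuous_on S ((*v) K)" by (rule linear_continuous_on) (rule matrix_vector_mul_bounded_linear)
  have cQ: "continuous_on S ((*v) Q)" by (rule linear_continuous_on) (rule matrix_vector_mul_bounded_linear)
  have cN: "continuous_on S N" unfolding N_def by (intro continuous_on_inner continuous_on_id cK)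
  have cD: "continuous_on S D" unfolding D_def by (intro continuous_on_inner continuous_on_id cQ)
  have cont: "continuous_on S (\<lambda>x. N x / D x)"
    using cN cD Dpos S0 by (intro continuous_on_divide) (auto simp: less_imp_neq[symmetric])
  obtain q0 where q0S: "q0 \<in> S" and mx: "\<forall>y\<in>S. N y / D y \<le> N q0 / D q0"
    using continuous_attains_sup[OF _ Sne cont] unfolding S_def by auto
  define lam where "lam = N q0 / D q0"
  have Dq0: "0 < D q0" using Dpos S0 q0S by blast
  have Nq0: "N q0 = lam * D q0" using Dq0 unfolding lam_def by simp
  have hom: "N (c *\<^sub>R x) = c^2 * N x" "D (c *\<^sub>R x) = c^2 * D x" for c x
    unfolding N_def D_def by (simp_all add: matrix_vector_mult_scaleR power2_eq_square)
  have bound: "N x \<le> lam * D x" for x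
  proof (cases "x = 0")
    case True then show ?thesis by (simp add: N_def D_def)
  next
    case False
    define c where "c = 1 / norm x"
    have "c *\<^sub>R x \<in> S" using False unfolding S_def c_def by simp
    then have "N (c *\<^sub>R x) / D (c *\<^sub>R x) \<le> lam" using mx lam_def by blast
    moreover have "c \<noteq> 0" using False c_def by simp
    ultimately have "N x / D x \<le> lam" by (simp add: hom)
    then show ?thesis using Dpos[OF False] by (simp add: divide_le_eq)
  qed
  have lagr: "K *v q0 = lam *\<^sub>R (Q *v q0)"
  proof -
    define r where "r = K *v q0 - lam *\<^sub>R (Q *v q0)"
    have "2 * t * (r \<bullet> r) + t^2 * (N r - lam * D r) \<le> 0" for t
    proof -
      have "N (q0 + t *\<^sub>R r) \<le> lam * D (q0 + t *\<^sub>R r)" by (rule bound)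
      moreover have "N (q0 + t *\<^sub>R r) = N q0 + 2 * t * ((K *v q0) \<bullet> r) + t^2 * N r"
        unfolding N_def by (rule quad_expand[OF symK])
      moreover have "D (q0 + t *\<^sub>R r) = D q0 + 2 * t * ((Q *v q0) \<bullet> r) + t^2 * D r"
        unfolding D_def by (rule quad_expand[OF symQ])
      moreover have "(K *v q0) \<bullet> r = r \<bullet> r + lam * ((Q *v q0) \<bullet> r)"
        unfolding r_def by (simp add: inner_diff_left)
      ultimately have "lam * D q0 + 2 * t * (r \<bullet> r + lam * ((Q *v q0) \<bullet> r)) + t^2 * N r
          \<le> lam * (D q0 + 2 * t * ((Q *v q0) \<bullet> r) + t^2 * D r)" using Nq0 by simp
      then show ?thesis by (simp add: algebra_simps)
    qed
    then have "r \<bullet> r = 0" by (rule quad_nonpos)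
    then show ?thesis unfolding r_def by simp
  qed
  define E where "E = {l. \<exists>x. x \<noteq> 0 \<and> (matrix_inv Q ** K) *v x = l *\<^sub>R x}"
  have "(matrix_inv Q ** K) *v q0 = lam *\<^sub>R q0"
    by (simp add: matrix_vector_mul_assoc[symmetric] lagr matrix_vector_mult_scaleR inv_props(4)[OF invQ])
  then have lamE: "lam \<in> E" unfolding E_def using S0 q0S by blast
  have ub: "l \<le> lam" if "l \<in> E" for l
  proof -
    obtain x where x: "x \<noteq> 0" "(matrix_inv Q ** K) *v x = l *\<^sub>R x" using \<open>l \<in> E\<close> E_def by blast
    have "K *v x = Q *v ((matrix_inv Q ** K) *v x)"
      by (simp add: matrix_vector_mul_assoc[symmetric] inv_props(3)[OF invQ])
    then have "K *v x = l *\<^sub>R (Q *v x)" using x(2) by (simp add: matrix_vector_mult_scaleR)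
    then have "N x = l * D x" unfolding N_def D_def by simp
    then have "l * D x \<le> lam * D x" using bound[of x] by simp
    then show ?thesis using Dpos[OF x(1)] by simp
  qed
  have lm: "lambda_max (matrix_inv Q ** K) = lam"
    unfolding lambda_max_def E_def[symmetric] by (rule cSup_eq_maximum[OF lamE ub])
  have "0 \<le> lam" unfolding lam_def using psdK[of q0] Dq0 N_def by simp
  then show ?thesis using lm bound unfolding N_def D_def by simp
qed




lemma final_arith:
  fixes a mf mh A C L2 eps X Y dx dy an bn cn dn G F P H Q Xc Yc Z W Sx Sy X0 Y0 :: real
  assumes a: "0 < a" and mf: "0 < mf" and L2: "L2 = A^2 + C^2" and A: "0 \<le> A" and C: "0 \<le> C"
    and aL: "a * L2 < mh"
    and nn: "0 \<le> X" "0 \<le> Y" "0 \<le> dx" "0 \<le> dy" "0 \<le> an" "0 \<le> bn" "0 \<le> cn" "0 \<le> dn" "0 \<le> eps"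
    and e1: "X^2 - X0 = 2*Sx - dx^2" and e2: "Y^2 - Y0 = 2*Sy - dy^2"
    and eS: "Sx + Sy = a * (G - F - P + Xc - H - Q - Yc + Z - W)"
    and hG: "G \<le> sqrt eps * X" and hF: "mf * X^2 \<le> F + P" and hH: "mh * Y^2 \<le> H + Q"
    and hc: "cn^2 \<le> F" and ha: "an^2 \<le> H" and hP: "P = bn^2" and hQ: "Q = dn^2"
    and hX: "Xc \<le> an * bn" and hY: "- Yc \<le> cn * dn" and hZ: "Z \<le> A * dy * Y" and hW: "- W \<le> C * dx * Y"
  shows "1/2 * X^2 + 1/2 * Y^2 \<le> 1/(1 + a * min (mf/2) (mh - a*L2)) * (1/2*X0 + 1/2*Y0)
           + 2*a/((1 + a*min (mf/2) (mh - a*L2)) * mf) * eps"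
proof -
  define sq where "sq = sqrt eps"
  have s2: "sq^2 = eps" using nn(9) sq_def by simp
  define mk where "mk = min (mf/2) (mh - a*L2)"
  have mk1: "mk \<le> mf/2" unfolding mk_def by (rule min.cobounded1)
  have mk2: "mk \<le> mh - a*L2" unfolding mk_def by (rule min.cobounded2)
  have mkpos: "0 < mk" using mf aL unfolding mk_def by simp
  have g1: "G \<le> 2*eps/mf + mf/8 * X^2"
  proof -
    have "0 \<le> mf/8*(X - 4 * sq / mf)^2" using mf by simp
    also have "mf/8*(X - 4 * sq / mf)^2 = mf/8*X^2 - sq*X + 2 * sq^2/mf"
      using mf by (simp add: field_simps power2_eq_square)
    finally show ?thesis using hG sq_def s2 by simp
  qed
  have g2': "0 \<le> (an - bn)^2" by simp
  then have g2: "an*bn \<le> (an^2+bn^2)/2" by (simp add: power2_eq_square algebra_simps)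
  have "0 \<le> (cn - dn)^2" by simp
  then have g3: "cn*dn \<le> (cn^2+dn^2)/2" by (simp add: power2_eq_square algebra_simps)
  have yg: "A*dy*Y \<le> a*A^2*Y^2/2 + dy^2/(2*a)" if "0 \<le> A" for A dy
  proof -
    have "0 \<le> (a/2)*(A*Y - dy/a)^2" using a by simp
    also have "(a/2)*(A*Y - dy/a)^2 = a*A^2*Y^2/2 - A*dy*Y + dy^2/(2*a)"
      using a by (simp add: field_simps power2_eq_square)
    finally show ?thesis by simp
  qed
  have g4: "Z \<le> a*A^2*Y^2/2 + dy^2/(2*a)" using yg[OF A, of dy] hZ by argo
  have g5: "- W \<le> a*C^2*Y^2/2 + dx^2/(2*a)" using yg[OF C, of dx] hW by argo
  have aLY: "a*A^2*Y^2/2 + a*C^2*Y^2/2 = a*L2*Y^2/2" unfolding L2 by (simp add: algebra_simps)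
  define Bk where "Bk = G - F - P + Xc - H - Q - Yc + Z - W"
  have bk: "Bk \<le> 2*eps/mf + mf/8*X^2 - mf/2*X^2 - mh/2*Y^2 + a*L2*Y^2/2 + (dx^2+dy^2)/(2*a)"
  proof -
    have "Bk \<le> 2*eps/mf + mf/8*X^2 - (F+P)/2 - (H+Q)/2 + a*L2*Y^2/2 + dx^2/(2*a) + dy^2/(2*a)"
    proof -
      have i1: "Xc \<le> (H + P)/2" using g2 hX ha hP by simp
      have i2: "- Yc \<le> (F + Q)/2" using g3 hY hc hQ by simp
      have i3: "Z - W \<le> a*L2*Y^2/2 + dx^2/(2*a) + dy^2/(2*a)" using g4 g5 aLY by argo
      show ?thesis unfolding Bk_def using g1 i1 i2 i3 by argo
    qed
    moreover have "dx^2/(2*a) + dy^2/(2*a) = (dx^2+dy^2)/(2*a)" by (simp add: add_divide_distrib)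
    ultimately show ?thesis using hF hH by argo
  qed
  have "a * Bk \<le> a * (2*eps/mf + mf/8*X^2 - mf/2*X^2 - mh/2*Y^2 + a*L2*Y^2/2 + (dx^2+dy^2)/(2*a))"
    using bk a by (intro mult_left_mono) auto
  also have "\<dots> = 2*a*eps/mf - 3/8*(a*mf*X^2) - (a*(mh - a*L2)*Y^2)/2 + (dx^2+dy^2)/2"
    using a mf by (simp add: field_simps)
  finally have aB: "a * Bk \<le> 2*a*eps/mf - 3/8*(a*mf*X^2) - (a*(mh - a*L2)*Y^2)/2 + (dx^2+dy^2)/2" .
  have t1: "a*mk*X^2/2 \<le> 3/8*(a*mf*X^2)"
  proof -
    have "a*X^2*mk \<le> a*X^2*(mf/2)" using mk1 a by (intro mult_left_mono) auto
    moreover have "a*X^2*(mf/2) \<le> a*X^2*(3/4*mf)" using mf a by (intro mult_left_mono) auto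
    ultimately show ?thesis by (simp add: algebra_simps)
  qed
  have t2: "a*mk*Y^2/2 \<le> (a*(mh - a*L2)*Y^2)/2"
  proof -
    have "a*Y^2*mk \<le> a*Y^2*(mh - a*L2)" using mk2 a by (intro mult_left_mono) auto
    then show ?thesis by (simp add: algebra_simps)
  qed
  define E1 where "E1 = 1/2 * X^2 + 1/2 * Y^2"
  define E0 where "E0 = 1/2*X0 + 1/2*Y0"
  have "E1 - E0 = Sx + Sy - (dx^2+dy^2)/2" unfolding E1_def E0_def using e1 e2 by argo
  also have "\<dots> = a * Bk - (dx^2+dy^2)/2" unfolding Bk_def using eS by simp
  moreover have "a*mk*E1 = a*mk*X^2/2 + a*mk*Y^2/2" unfolding E1_def by (simp add: algebra_simps)
  ultimately have "E1 - E0 \<le> 2*a*eps/mf - a*mk*E1"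
    using aB t1 t2 by argo
  then have main: "(1 + a*mk) * E1 \<le> E0 + 2*a*eps/mf" by (simp add: algebra_simps)
  have pos: "0 < 1 + a*mk" using a mkpos by (simp add: add_pos_pos)
  have "E1 \<le> (E0 + 2*a*eps/mf) / (1 + a*mk)" using main pos by (simp add: field_simps)
  also have "\<dots> = E0/(1 + a*mk) + (2*a*eps/mf)/(1 + a*mk)" by (rule add_divide_distrib)
  also have "\<dots> = 1/(1 + a*mk) * E0 + 2*a/((1 + a*mk) * mf) * eps"
    by (simp add: mult.commute)
  finally show ?thesis unfolding E1_def E0_def mk_def .
qed




lemma inner_fun_eq:
  fixes a b :: "real^'n"
  assumes "(\<lambda>v. a \<bullet> v) = (\<lambda>v. b \<bullet> v)"
  shows "a = b"
proof -
  have "a \<bullet> (a - b) = b \<bullet> (a - b)" using assms by metis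
  then have "(a - b) \<bullet> (a - b) = 0" by (simp add: inner_diff_left)
  then show ?thesis by simp
qed

lemma quad_deriv_shift:
  assumes sym: "transpose (M::real^'n^'n) = M"
  shows "((\<lambda>x. (x + c) \<bullet> (M *v (x + c))) has_derivative (\<lambda>v. (2 *\<^sub>R (M *v (x + c))) \<bullet> v)) (at x)"
proof -
  have "((\<lambda>x. x + c) has_derivative (\<lambda>v. v)) (at x)" by (auto intro!: derivative_eq_intros)
  from has_derivative_compose[OF this quad_deriv[OF sym, of "x + c"]]
  show ?thesis by simp
qed

lemma quad_diff_identity:
  assumes sym: "transpose (M::real^'n^'n) = M"
  shows "a \<bullet> (M *v a) - b \<bullet> (M *v b) = 2 * ((a - b) \<bullet> (M *v a)) - (a - b) \<bullet> (M *v (a - b))"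
proof -
  have "b \<bullet> (M *v a) = a \<bullet> (M *v b)" using inner_mv_sym[OF sym, of a b] by (simp add: inner_commute)
  then show ?thesis
    by (simp add: inner_diff_left inner_diff_right matrix_vector_mult_diff_distrib algebra_simps)
qed



declare transpose_matrix_vector[simp del]

lemma mv_minus: "(A::real^'n^'m) *v (- x) = - (A *v x)"
  by (metis diff_0 matrix_vector_mult_0_right matrix_vector_mult_diff_distrib)

lemma one_step:
  fixes f :: "real^'m \<Rightarrow> real" and gf :: "real^'m \<Rightarrow> real^'m"
    and h :: "real^'n \<Rightarrow> real" and gh :: "real^'n \<Rightarrow> real^'n"
    and B :: "real^'m^'n"
    and TU IV :: "real^'m^'m" and TP IQ :: "real^'n^'n"
    and us uk u1 uh :: "real^'m" and ps pk p1 :: "real^'n"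
    and ghB :: "real^'n \<Rightarrow> real^'n"
    and a e mu_hTP L_hTP mu_fTU L_fTU mu_fB mu_hB L_hB L_eU LSQ2 :: real and g :: "real^'m"
  assumes f_cvx: "convex_on UNIV f" and h_cvx: "convex_on UNIV h"
    and f_grad: "\<And>x. (f has_derivative (\<lambda>v. gf x \<bullet> v)) (at x)"
    and h_grad: "\<And>x. (h has_derivative (\<lambda>v. gh x \<bullet> v)) (at x)"
    and saddle1: "gf us + transpose B *v ps = 0"
    and saddle2: "B *v us = gh ps"
    and spdTU: "spd TU" and spdIV: "spd IV" and spdTP: "spd TP" and spdIQ: "spd IQ"
    and h_S11: "S11 h gh TP mu_hTP L_hTP" and L_hTP: "L_hTP \<le> 1"
    and f_S11: "S11 f gf TU mu_fTU L_fTU" and L_fTU: "L_fTU \<le> 1"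
    and fB_sc: "strongly_convex_wrt IV mu_fB (fB f B TP)" and mu_fB: "mu_fB > 0"
    and hB_sc: "strongly_convex_wrt IQ mu_hB (hB h B TU)"
    and ghB: "\<And>q. (hB h B TU has_derivative (\<lambda>v. ghB q \<bullet> v)) (at q)"
    and L_hB: "\<And>q r. mnorm (matrix_inv IQ) (ghB q - ghB r) \<le> L_hB * mnorm IQ (q - r)"
    and L_eU: "\<And>v w. mnorm IV (eU gf TU v - eU gf TU w) \<le> L_eU * mnorm IV (v - w)"
    and half: "uh = uk - matrix_inv TU *v (gf uk + transpose B *v pk)"
    and pstep: "p1 = pk - a *\<^sub>R (matrix_inv IQ *v (gh pk - B *v uh))"
    and ustep: "(fBtilde f gh B TP IV a uk p1 has_derivative (\<lambda>v. g \<bullet> v)) (at u1)"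
    and geps: "(mnorm (matrix_inv IV) g)^2 \<le> e"
    and a: "0 < a" and aL: "a < mu_hB / LSQ2"
    and LSQ2: "LSQ2 = L_hB^2 + L_eU^2 * lambda_max (matrix_inv IQ ** B ** matrix_inv IV ** transpose B)"
  shows "energy IV IQ us ps u1 p1 \<le> 1 / (1 + a * min (mu_fB / 2) (mu_hB - a * LSQ2)) * energy IV IQ us ps uk pk
          + 2 * a / ((1 + a * min (mu_fB / 2) (mu_hB - a * LSQ2)) * mu_fB) * e"
proof -
  have invTU: "invertible TU" and invIV: "invertible IV" and invTP: "invertible TP" and invIQ: "invertible IQ"
    using spd_invertible spdTU spdIV spdTP spdIQ by blast+
  have symTU: "transpose TU = TU" and symIV: "transpose IV = IV" and symTP: "transpose TP = TP"
    and symIQ: "transpose IQ = IQ" using spdTU spdIV spdTP spdIQ spd_def by blast+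
  define TUi where "TUi = matrix_inv TU"
  define TPi where "TPi = matrix_inv TP"
  define IVi where "IVi = matrix_inv IV"
  define IQi where "IQi = matrix_inv IQ"
  have spdTUi: "spd TUi" and spdTPi: "spd TPi" and spdIVi: "spd IVi" and spdIQi: "spd IQi"
    unfolding TUi_def TPi_def IVi_def IQi_def using spd_inv spdTU spdIV spdTP spdIQ by blast+
  have symTUi: "transpose TUi = TUi" and symTPi: "transpose TPi = TPi" and symIVi: "transpose IVi = IVi"
    using spdTUi spdTPi spdIVi spd_def by blast+
  define Kf where "Kf = transpose B ** TPi ** B"
  define Kh where "Kh = B ** TUi ** transpose B"
  have Kf_mv: "Kf *v x = transpose B *v (TPi *v (B *v x))" for x
    unfolding Kf_def by (simp add: matrix_vector_mul_assoc matrix_mul_assoc)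
  have Kh_mv: "Kh *v q = B *v (TUi *v (transpose B *v q))" for q
    unfolding Kh_def by (simp add: matrix_vector_mul_assoc matrix_mul_assoc)
  have symKf: "transpose Kf = Kf" unfolding Kf_def
    by (simp add: matrix_transpose_mul symTPi matrix_mul_assoc)
  have symKh: "transpose Kh = Kh" unfolding Kh_def
    by (simp add: matrix_transpose_mul symTUi matrix_mul_assoc)
  have fB_eq: "fB f B TP = (\<lambda>u. f u + 1/2 * (u \<bullet> (Kf *v u)))"
    unfolding fB_def Kf_def TPi_def by (simp add: inner_commute fun_eq_iff)
  have dfB: "(fB f B TP has_derivative (\<lambda>v. (gf u + Kf *v u) \<bullet> v)) (at u)" for u
  proof -
    have "((\<lambda>u. f u + 1/2 * (u \<bullet> (Kf *v u))) has_derivative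
           (\<lambda>v. gf u \<bullet> v + 1/2 * ((2 *\<^sub>R (Kf *v u)) \<bullet> v))) (at u)"
      by (intro has_derivative_add f_grad has_derivative_mult_right quad_deriv symKf)
    then show ?thesis unfolding fB_eq
      by (rule has_derivative_eq_rhs) (simp add: fun_eq_iff inner_add_left)
  qed
  have hB_eq: "hB h B TU = (\<lambda>q. h q + 1/2 * (q \<bullet> (Kh *v q)))"
    unfolding hB_def Kh_def TUi_def by (simp add: inner_commute fun_eq_iff)
  have dhB: "(hB h B TU has_derivative (\<lambda>v. (gh q + Kh *v q) \<bullet> v)) (at q)" for q
  proof -
    have "((\<lambda>q. h q + 1/2 * (q \<bullet> (Kh *v q))) has_derivative
           (\<lambda>v. gh q \<bullet> v + 1/2 * ((2 *\<^sub>R (Kh *v q)) \<bullet> v))) (at q)"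
      by (intro has_derivative_add h_grad has_derivative_mult_right quad_deriv symKh)
    then show ?thesis unfolding hB_eq
      by (rule has_derivative_eq_rhs) (simp add: fun_eq_iff inner_add_left)
  qed
  have ghB_eq: "ghB q = gh q + Kh *v q" for q
    using has_derivative_unique[OF ghB dhB] by (rule inner_fun_eq)
  define r where "r = transpose B *v (p1 - TPi *v gh p1)"
  define c where "c = a *\<^sub>R (IVi *v r)"
  have fBt_eq: "fBtilde f gh B TP IV a uk p1 =
      (\<lambda>u. fB f B TP u + 1 / (2 * a) * ((u + (c - uk)) \<bullet> (IV *v (u + (c - uk)))))"
    unfolding fBtilde_def mnorm_sq[OF spdIV] c_def r_def IVi_def TPi_def
    by (simp add: fun_eq_iff algebra_simps)
  have "(fBtilde f gh B TP IV a uk p1 has_derivative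
      (\<lambda>v. (gf u1 + Kf *v u1) \<bullet> v + 1 / (2 * a) * ((2 *\<^sub>R (IV *v (u1 + (c - uk)))) \<bullet> v))) (at u1)"
    unfolding fBt_eq
    by (intro has_derivative_add dfB has_derivative_mult_right quad_deriv_shift symIV)
  then have "(fBtilde f gh B TP IV a uk p1 has_derivative
      (\<lambda>v. (gf u1 + Kf *v u1 + (1 / a) *\<^sub>R (IV *v (u1 + (c - uk)))) \<bullet> v)) (at u1)"
    by (rule has_derivative_eq_rhs) (simp add: fun_eq_iff inner_add_left)
  from has_derivative_unique[OF ustep this]
  have g_eq: "g = gf u1 + Kf *v u1 + (1 / a) *\<^sub>R (IV *v (u1 + (c - uk)))" by (rule inner_fun_eq)
  have "IV *v (u1 + (c - uk)) = IV *v (u1 - uk) + a *\<^sub>R r"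
    unfolding c_def IVi_def
    by (simp add: matrix_vector_right_distrib matrix_vector_mult_diff_distrib matrix_vector_mult_scaleR
        inv_props(3)[OF invIV] algebra_simps)
  then have g_eq2: "g = gf u1 + Kf *v u1 + (1 / a) *\<^sub>R (IV *v (u1 - uk)) + r"
    using a g_eq by (simp add: scaleR_add_right)
  have IVstep: "IV *v (u1 - uk) = a *\<^sub>R (g - gf u1 - Kf *v u1 - r)"
  proof -
    have "g - gf u1 - Kf *v u1 - r = (1 / a) *\<^sub>R (IV *v (u1 - uk))" using g_eq2 by simp
    then show ?thesis using a by simp
  qed
  define x where "x = uk - us"
  define y where "y = pk - ps"
  define x1 where "x1 = u1 - us"
  define y1 where "y1 = p1 - ps"
  define Df where "Df = gf u1 - gf us"
  define Dh where "Dh = gh p1 - gh ps"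
  have gfus: "gf us = - (transpose B *v ps)" using saddle1 by (simp add: eq_neg_iff_add_eq_0)
  have u1x1: "u1 = x1 + us" unfolding x1_def by simp
  have Kfu1: "Kf *v u1 = Kf *v x1 + transpose B *v (TPi *v gh ps)"
    unfolding u1x1 by (simp add: matrix_vector_right_distrib Kf_mv saddle2)
  have vec1: "g - gf u1 - Kf *v u1 - r = g - Df - Kf *v x1 - transpose B *v (y1 - TPi *v Dh)"
    unfolding Kfu1 r_def Df_def y1_def Dh_def gfus
    by (simp add: matrix_vector_mult_diff_distrib algebra_simps)
  have BT: "(transpose B *v z) \<bullet> w = z \<bullet> (B *v w)" for z w
    using inner_mv[of "transpose B" z w] by simp
  have Bm: "(B *v z) \<bullet> w = z \<bullet> (transpose B *v w)" for z w
    using inner_mv[of B z w] by simp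
  define Gt where "Gt = g \<bullet> x1"
  define F where "F = Df \<bullet> x1"
  define P where "P = (B *v x1) \<bullet> (TPi *v (B *v x1))"
  define Xc where "Xc = (B *v x1) \<bullet> (TPi *v Dh)"
  define cr where "cr = y1 \<bullet> (B *v x1)"
  have P_eq: "(Kf *v x1) \<bullet> x1 = P" unfolding P_def Kf_mv BT by (simp add: inner_commute)
  define Sx where "Sx = (u1 - uk) \<bullet> (IV *v x1)"
  have Sx_eq: "Sx = a * (Gt - F - P - cr + Xc)"
  proof -
    have "Sx = (IV *v (u1 - uk)) \<bullet> x1" unfolding Sx_def using inner_mv_sym[OF symIV] by simp
    also have "\<dots> = a * ((g - Df - Kf *v x1 - transpose B *v (y1 - TPi *v Dh)) \<bullet> x1)"
      unfolding IVstep vec1 by simp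
    also have "(g - Df - Kf *v x1 - transpose B *v (y1 - TPi *v Dh)) \<bullet> x1 = Gt - F - P - cr + Xc"
      unfolding Gt_def F_def P_eq[symmetric] cr_def Xc_def inner_diff_left BT
      by (simp add: inner_diff_left inner_commute)
    finally show ?thesis .
  qed
  define eUf where "eUf = eU gf TU"
  have eU_eq: "eUf v = v - TUi *v gf v" for v unfolding eUf_def eU_def TUi_def by simp
  have IQstep: "IQ *v (p1 - pk) = - (a *\<^sub>R (gh pk - B *v uh))"
    unfolding pstep by (simp add: mv_minus matrix_vector_mult_scaleR inv_props(3)[OF invIQ])
  have Khps: "Kh *v ps = - (B *v (TUi *v gf us))"
    unfolding Kh_mv gfus by (simp add: mv_minus)
  have vec2: "gh pk - B *v uh = (ghB pk - ghB ps) - B *v (eUf uk - eUf us)"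
    unfolding ghB_eq eU_eq half Khps saddle2[symmetric] TUi_def[symmetric]
    by (simp add: Kh_mv matrix_vector_mult_diff_distrib matrix_vector_right_distrib algebra_simps)
  have vec3: "(ghB pk - ghB ps) - B *v (eUf uk - eUf us)
      = Dh + Kh *v y1 - (ghB p1 - ghB pk) - B *v (x1 - TUi *v Df) + B *v (eUf u1 - eUf uk)"
    unfolding ghB_eq eU_eq Dh_def y1_def x1_def Df_def
    by (simp add: matrix_vector_mult_diff_distrib matrix_vector_right_distrib algebra_simps)
  define H where "H = Dh \<bullet> y1"
  define Q where "Q = (transpose B *v y1) \<bullet> (TUi *v (transpose B *v y1))"
  define Z where "Z = (ghB p1 - ghB pk) \<bullet> y1"
  define Yc where "Yc = (transpose B *v y1) \<bullet> (TUi *v Df)"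
  define W where "W = (eUf u1 - eUf uk) \<bullet> (transpose B *v y1)"
  have Q_eq: "(Kh *v y1) \<bullet> y1 = Q" unfolding Q_def Kh_mv Bm by (simp add: inner_commute)
  have crx: "x1 \<bullet> (transpose B *v y1) = y1 \<bullet> (B *v x1)" using BT[of y1 x1] by (simp add: inner_commute)
  define Sy where "Sy = (p1 - pk) \<bullet> (IQ *v y1)"
  have Sy_eq: "Sy = - a * (H + Q - Z - cr + Yc + W)"
  proof -
    have "Sy = (IQ *v (p1 - pk)) \<bullet> y1" unfolding Sy_def using inner_mv_sym[OF symIQ] by simp
    also have "\<dots> = - a * ((Dh + Kh *v y1 - (ghB p1 - ghB pk) - B *v (x1 - TUi *v Df) + B *v (eUf u1 - eUf uk)) \<bullet> y1)"
      unfolding IQstep vec2 vec3 by simp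
    also have "(Dh + Kh *v y1 - (ghB p1 - ghB pk) - B *v (x1 - TUi *v Df) + B *v (eUf u1 - eUf uk)) \<bullet> y1
        = H + Q - Z - cr + Yc + W"
      unfolding H_def Q_eq[symmetric] Z_def cr_def Yc_def W_def inner_diff_left inner_add_left Bm
      by (simp add: inner_diff_left inner_commute crx)
    finally show ?thesis .
  qed
  define X where "X = mnorm IV x1"
  define Y where "Y = mnorm IQ y1"
  define dx where "dx = mnorm IV (u1 - uk)"
  define dy where "dy = mnorm IQ (p1 - pk)"
  define X0 where "X0 = (mnorm IV x)^2"
  define Y0 where "Y0 = (mnorm IQ y)^2"
  define an where "an = sqrt (Dh \<bullet> (TPi *v Dh))"
  define bn where "bn = sqrt P"
  define cn where "cn = sqrt (Df \<bullet> (TUi *v Df))"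
  define dn where "dn = sqrt Q"
  define K where "K = B ** IVi ** transpose B"
  define lam where "lam = lambda_max (matrix_inv IQ ** K)"
  have lam_eq: "lambda_max (matrix_inv IQ ** B ** matrix_inv IV ** transpose B) = lam"
    unfolding lam_def K_def IVi_def by (simp add: matrix_mul_assoc)
  define A where "A = \<bar>L_hB\<bar>"
  define C where "C = \<bar>L_eU\<bar> * sqrt lam"
  have K_mv: "K *v q = B *v (IVi *v (transpose B *v q))" for q
    unfolding K_def by (simp add: matrix_vector_mul_assoc matrix_mul_assoc)
  have symK: "transpose K = K" unfolding K_def
    by (simp add: matrix_transpose_mul symIVi matrix_mul_assoc)
  have Kq: "q \<bullet> (K *v q) = (transpose B *v q) \<bullet> (IVi *v (transpose B *v q))" for q
    unfolding K_mv using Bm[of "IVi *v (transpose B *v q)" q] by (simp add: inner_commute)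
  have psdK: "0 \<le> q \<bullet> (K *v q)" for q unfolding Kq by (rule spd_nonneg[OF spdIVi])
  have spec: "0 \<le> lam \<and> (\<forall>q. q \<bullet> (K *v q) \<le> lam * (q \<bullet> (IQ *v q)))"
    unfolding lam_def by (rule spectral[OF symK psdK spdIQ])
  have lam0: "0 \<le> lam" using spec by blast
  have nX: "0 \<le> X" "0 \<le> Y" "0 \<le> dx" "0 \<le> dy"
    unfolding X_def Y_def dx_def dy_def using mnorm_nonneg spdIV spdIQ by blast+
  have nP: "0 \<le> P" unfolding P_def by (rule spd_nonneg[OF spdTPi])
  have nQ: "0 \<le> Q" unfolding Q_def by (rule spd_nonneg[OF spdTUi])
  have nDh: "0 \<le> Dh \<bullet> (TPi *v Dh)" by (rule spd_nonneg[OF spdTPi])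
  have nDf: "0 \<le> Df \<bullet> (TUi *v Df)" by (rule spd_nonneg[OF spdTUi])
  have ne: "0 \<le> e" using geps by (meson order_trans zero_le_power2)
  have L2: "LSQ2 = A^2 + C^2"
    unfolding LSQ2 lam_eq A_def C_def using lam0 by (simp add: power_mult_distrib)
  have L2nn: "0 \<le> LSQ2" unfolding L2 by simp
  have aL2: "a * LSQ2 < mu_hB"
  proof (cases "LSQ2 = 0")
    case True then show ?thesis using aL a by simp
  next
    case False then have "0 < LSQ2" using L2nn by simp
    then show ?thesis using aL by (simp add: less_divide_eq mult.commute)
  qed
  have e1: "X^2 - X0 = 2 * Sx - dx^2"
  proof -
    have "x1 - x = u1 - uk" unfolding x1_def x_def by simp
    then show ?thesis unfolding X_def X0_def dx_def Sx_def mnorm_sq[OF spdIV]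
      using quad_diff_identity[OF symIV, of x1 x] by simp
  qed
  have e2: "Y^2 - Y0 = 2 * Sy - dy^2"
  proof -
    have "y1 - y = p1 - pk" unfolding y1_def y_def by simp
    then show ?thesis unfolding Y_def Y0_def dy_def Sy_def mnorm_sq[OF spdIQ]
      using quad_diff_identity[OF symIQ, of y1 y] by simp
  qed
  have eS: "Sx + Sy = a * (Gt - F - P + Xc - H - Q - Yc + Z - W)"
    unfolding Sx_eq Sy_eq by (simp add: algebra_simps)
  have hG: "Gt \<le> sqrt e * X"
  proof -
    have "Gt \<le> mnorm IVi g * X" unfolding Gt_def X_def IVi_def using spd_cs[OF spdIV, of g x1] by simp
    moreover have "mnorm IVi g \<le> sqrt e"
    proof -
      have "mnorm IVi g = sqrt ((mnorm IVi g)^2)" using mnorm_nonneg[OF spdIVi] by simp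
      also have "\<dots> \<le> sqrt e" using geps IVi_def real_sqrt_le_mono by blast
      finally show ?thesis .
    qed
    ultimately show ?thesis using nX(1) by (meson mult_right_mono order_trans)
  qed
  have hF: "mu_fB * X^2 \<le> F + P"
  proof -
    have "mu_fB * ((u1 - us) \<bullet> (IV *v (u1 - us))) \<le> ((gf u1 + Kf *v u1) - (gf us + Kf *v us)) \<bullet> (u1 - us)"
      by (rule strong_monotone[OF spdIV fB_sc dfB])
    moreover have "((gf u1 + Kf *v u1) - (gf us + Kf *v us)) = Df + Kf *v x1"
      unfolding Df_def x1_def by (simp add: matrix_vector_mult_diff_distrib)
    ultimately show ?thesis unfolding X_def mnorm_sq[OF spdIV] F_def P_eq[symmetric] x1_def[symmetric]
      by (simp add: inner_add_left)
  qed
  have hH: "mu_hB * Y^2 \<le> H + Q"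
  proof -
    have "mu_hB * ((p1 - ps) \<bullet> (IQ *v (p1 - ps))) \<le> (ghB p1 - ghB ps) \<bullet> (p1 - ps)"
      by (rule strong_monotone[OF spdIQ hB_sc ghB])
    moreover have "ghB p1 - ghB ps = Dh + Kh *v y1"
      unfolding ghB_eq Dh_def y1_def by (simp add: matrix_vector_mult_diff_distrib)
    ultimately show ?thesis unfolding Y_def mnorm_sq[OF spdIQ] H_def Q_eq[symmetric] y1_def[symmetric]
      by (simp add: inner_add_left)
  qed
  have hc: "cn^2 \<le> F"
    unfolding cn_def F_def using nDf cocoercive[OF spdTU f_cvx f_grad f_S11 L_fTU, of u1 us]
    by (simp add: Df_def x1_def TUi_def)
  have ha: "an^2 \<le> H"
    unfolding an_def H_def using nDh cocoercive[OF spdTP h_cvx h_grad h_S11 L_hTP, of p1 ps]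
    by (simp add: Dh_def y1_def TPi_def)
  have hP: "P = bn^2" unfolding bn_def using nP by simp
  have hQ: "Q = dn^2" unfolding dn_def using nQ by simp
  have hX: "Xc \<le> an * bn"
  proof -
    have "\<bar>(B *v x1) \<bullet> (TPi *v Dh)\<bar> \<le> sqrt P * sqrt (Dh \<bullet> (TPi *v Dh))"
      unfolding P_def by (rule psd_cs_abs[OF symTPi spd_nonneg[OF spdTPi]])
    then show ?thesis unfolding Xc_def an_def bn_def by (simp add: mult.commute)
  qed
  have hY: "- Yc \<le> cn * dn"
  proof -
    have "\<bar>(transpose B *v y1) \<bullet> (TUi *v Df)\<bar> \<le> sqrt Q * sqrt (Df \<bullet> (TUi *v Df))"
      unfolding Q_def by (rule psd_cs_abs[OF symTUi spd_nonneg[OF spdTUi]])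
    then show ?thesis unfolding Yc_def cn_def dn_def by (simp add: mult.commute)
  qed
  have hZ: "Z \<le> A * dy * Y"
  proof -
    have "Z \<le> mnorm IQi (ghB p1 - ghB pk) * Y"
      unfolding Z_def Y_def IQi_def using spd_cs[OF spdIQ] abs_le_D1 by blast
    moreover have "mnorm IQi (ghB p1 - ghB pk) \<le> A * dy"
    proof -
      have "mnorm IQi (ghB p1 - ghB pk) \<le> L_hB * dy" unfolding IQi_def dy_def by (rule L_hB)
      also have "L_hB * dy \<le> A * dy" unfolding A_def using nX(4) by (simp add: mult_right_mono)
      finally show ?thesis .
    qed
    ultimately show ?thesis using nX(2) by (meson mult_right_mono order_trans)
  qed
  have hW: "- W \<le> C * dx * Y"
  proof -
    have "- W \<le> mnorm IV (eUf u1 - eUf uk) * mnorm IVi (transpose B *v y1)"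
      unfolding W_def IVi_def using spd_cs'[OF spdIV] by (metis abs_le_D2 inner_minus_left)
    moreover have "mnorm IV (eUf u1 - eUf uk) \<le> \<bar>L_eU\<bar> * dx"
    proof -
      have "mnorm IV (eUf u1 - eUf uk) \<le> L_eU * dx" unfolding eUf_def dx_def by (rule L_eU)
      also have "L_eU * dx \<le> \<bar>L_eU\<bar> * dx" using nX(3) by (simp add: mult_right_mono)
      finally show ?thesis .
    qed
    moreover have "mnorm IVi (transpose B *v y1) \<le> sqrt lam * Y"
    proof -
      have "(mnorm IVi (transpose B *v y1))^2 = y1 \<bullet> (K *v y1)"
        unfolding mnorm_sq[OF spdIVi] Kq ..
      also have "\<dots> \<le> lam * Y^2" using spec unfolding Y_def mnorm_sq[OF spdIQ] by blast
      finally have "(mnorm IVi (transpose B *v y1))^2 \<le> lam * Y^2" .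
      then have "sqrt ((mnorm IVi (transpose B *v y1))^2) \<le> sqrt (lam * Y^2)"
        using real_sqrt_le_mono by blast
      then show ?thesis using mnorm_nonneg[OF spdIVi] nX(2) by (simp add: real_sqrt_mult)
    qed
    ultimately have "- W \<le> (\<bar>L_eU\<bar> * dx) * (sqrt lam * Y)"
      by (meson mnorm_nonneg[OF spdIV] mnorm_nonneg[OF spdIVi] mult_mono order_trans
          abs_ge_zero mult_nonneg_nonneg nX(3))
    then show ?thesis unfolding C_def by (simp add: algebra_simps)
  qed
  have A0: "0 \<le> A" and C0: "0 \<le> C" unfolding A_def C_def using lam0 by simp_all
  have fin: "1/2 * X^2 + 1/2 * Y^2 \<le> 1/(1 + a * min (mu_fB/2) (mu_hB - a*LSQ2)) * (1/2*X0 + 1/2*Y0)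
           + 2*a/((1 + a*min (mu_fB/2) (mu_hB - a*LSQ2)) * mu_fB) * e"
    by (rule final_arith[OF a mu_fB L2 A0 C0 aL2 nX(1) nX(2) nX(3) nX(4) _ _ _ _ ne e1 e2 eS hG hF hH
          hc ha hP hQ hX hY hZ hW]) (simp_all add: an_def bn_def cn_def dn_def nDh nP nDf nQ)
  then show ?thesis
    unfolding energy_def X_def Y_def X0_def Y0_def x1_def y1_def x_def y_def by simp
qed



lemma lam_nonneg:
  fixes B :: "real^'m^'n" and IV :: "real^'m^'m" and IQ :: "real^'n^'n"
  assumes spdIV: "spd IV" and spdIQ: "spd IQ"
  shows "0 \<le> lambda_max (matrix_inv IQ ** B ** matrix_inv IV ** transpose B)"
proof -
  define IVi where "IVi = matrix_inv IV"
  have spdIVi: "spd IVi" unfolding IVi_def using spd_inv[OF spdIV] .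
  have symIVi: "transpose IVi = IVi" using spdIVi spd_def by blast
  define K where "K = B ** IVi ** transpose B"
  have K_mv: "K *v q = B *v (IVi *v (transpose B *v q))" for q
    unfolding K_def by (simp add: matrix_vector_mul_assoc matrix_mul_assoc)
  have symK: "transpose K = K" unfolding K_def
    by (simp add: matrix_transpose_mul symIVi matrix_mul_assoc)
  have Kq: "q \<bullet> (K *v q) = (transpose B *v q) \<bullet> (IVi *v (transpose B *v q))" for q
    unfolding K_mv using inner_mv[of B "IVi *v (transpose B *v q)" q] by (simp add: inner_commute)
  have psdK: "0 \<le> q \<bullet> (K *v q)" for q unfolding Kq by (rule spd_nonneg[OF spdIVi])
  have "0 \<le> lambda_max (matrix_inv IQ ** K)" using spectral[OF symK psdK spdIQ] by blast
  then show ?thesis unfolding K_def IVi_def by (simp add: matrix_mul_assoc)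
qed

lemma LSQ2_pos:
  fixes h :: "real^'n \<Rightarrow> real" and B :: "real^'m^'n" and TU IV :: "real^'m^'m" and IQ :: "real^'n^'n"
    and ghB :: "real^'n \<Rightarrow> real^'n"
  assumes spdIV: "spd IV" and spdIQ: "spd IQ"
    and hB_sc: "strongly_convex_wrt IQ mu_hB (hB h B TU)"
    and ghB: "\<And>q. (hB h B TU has_derivative (\<lambda>v. ghB q \<bullet> v)) (at q)"
    and L_hB: "\<And>q r. mnorm (matrix_inv IQ) (ghB q - ghB r) \<le> L_hB * mnorm IQ (q - r)"
    and mu_hB: "mu_hB > 0"
    and LSQ2: "LSQ2 = L_hB^2 + L_eU^2 * lambda_max (matrix_inv IQ ** B ** matrix_inv IV ** transpose B)"
  shows "0 < LSQ2"
proof -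
  obtain e :: "real^'n" where e: "norm e = 1" using vector_choose_size[of 1] by auto
  then have e0: "e \<noteq> 0" by auto
  have Lne: "L_hB \<noteq> 0"
  proof
    assume L0: "L_hB = 0"
    have "mu_hB * ((e - 0) \<bullet> (IQ *v (e - 0))) \<le> (ghB e - ghB 0) \<bullet> (e - 0)"
      by (rule strong_monotone[OF spdIQ hB_sc ghB])
    also have "\<dots> \<le> mnorm (matrix_inv IQ) (ghB e - ghB 0) * mnorm IQ (e - 0)"
      using spd_cs[OF spdIQ] abs_le_D1 by blast
    also have "mnorm (matrix_inv IQ) (ghB e - ghB 0) \<le> 0"
      using L_hB[of e 0] L0 by simp
    then have "mnorm (matrix_inv IQ) (ghB e - ghB 0) * mnorm IQ (e - 0) \<le> 0"
      using mnorm_nonneg[OF spdIQ] by (simp add: mult_nonpos_nonneg)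
    finally have "mu_hB * (e \<bullet> (IQ *v e)) \<le> 0" by simp
    moreover have "0 < e \<bullet> (IQ *v e)" using spdIQ e0 spd_def by blast
    ultimately show False using mu_hB by (simp add: mult_le_0_iff)
  qed
  have "0 \<le> L_eU^2 * lambda_max (matrix_inv IQ ** B ** matrix_inv IV ** transpose B)"
    using lam_nonneg[OF spdIV spdIQ] by simp
  moreover have "0 < L_hB^2" using Lne by simp
  ultimately show ?thesis unfolding LSQ2 by linarith
qed

theorem corollary5p7:
  fixes f :: "real^'m \<Rightarrow> real" and gf :: "real^'m \<Rightarrow> real^'m"
    and h :: "real^'n \<Rightarrow> real" and gh :: "real^'n \<Rightarrow> real^'n"
    and B :: "real^'m^'n"
    and TU IV :: "real^'m^'m" and TP IQ :: "real^'n^'n"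
    and us :: "real^'m" and ps :: "real^'n"
    and ghB :: "real^'n \<Rightarrow> real^'n"
    and u uhalf :: "nat \<Rightarrow> real^'m" and p :: "nat \<Rightarrow> real^'n"
    and alpha eps :: "nat \<Rightarrow> real"
    and mu_hTP L_hTP mu_fTU L_fTU mu_fB mu_hB L_hB L_eU :: real
  assumes mn: "CARD('n) \<le> CARD('m)"
    and Brank: "rank B = CARD('n)"
    and f_cvx: "convex_on UNIV f" and h_cvx: "convex_on UNIV h"
    and f_grad: "\<And>x. (f has_derivative (\<lambda>v. gf x \<bullet> v)) (at x)"
    and h_grad: "\<And>x. (h has_derivative (\<lambda>v. gh x \<bullet> v)) (at x)"
    and gf_cont: "continuous_on UNIV gf" and gh_cont: "continuous_on UNIV gh"
    and gf_lip: "\<exists>L. L-lipschitz_on UNIV gf" and gh_lip: "\<exists>L. L-lipschitz_on UNIV gh"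
    and saddle1: "gf us + transpose B *v ps = 0"
    and saddle2: "B *v us = gh ps"
    and spd: "spd TU" "spd IV" "spd TP" "spd IQ"
    and h_S11: "S11 h gh TP mu_hTP L_hTP" and L_hTP: "L_hTP \<le> 1"
    and f_S11: "S11 f gf TU mu_fTU L_fTU" and L_fTU: "L_fTU \<le> 1"
    and fB_sc: "strongly_convex_wrt IV mu_fB (fB f B TP)" and mu_fB: "mu_fB > 0"
    and hB_sc: "strongly_convex_wrt IQ mu_hB (hB h B TU)" and mu_hB: "mu_hB > 0"
    and ghB: "\<And>q. (hB h B TU has_derivative (\<lambda>v. ghB q \<bullet> v)) (at q)"
    and L_hB: "\<And>q r. mnorm (matrix_inv IQ) (ghB q - ghB r) \<le> L_hB * mnorm IQ (q - r)"
    and L_eU: "\<And>v w. mnorm IV (eU gf TU v - eU gf TU w) \<le> L_eU * mnorm IV (v - w)"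
    and it_half: "\<And>k. uhalf k = u k - matrix_inv TU *v (gf (u k) + transpose B *v p k)"
    and it_p: "\<And>k. p (Suc k) = p k - alpha k *\<^sub>R (matrix_inv IQ *v (gh (p k) - B *v uhalf k))"
    and it_u: "\<And>k. \<exists>g. (fBtilde f gh B TP IV (alpha k) (u k) (p (Suc k)) has_derivative (\<lambda>v. g \<bullet> v))
                        (at (u (Suc k))) \<and> (mnorm (matrix_inv IV) g)^2 \<le> eps k"
  defines "LSQ2 \<equiv> L_hB^2 + L_eU^2 * lambda_max (matrix_inv IQ ** B ** matrix_inv IV ** transpose B)"
    and "rho \<equiv> 1 / (1 + mu_hB * min mu_fB mu_hB / (4 * (L_hB^2 + L_eU^2 *
                 lambda_max (matrix_inv IQ ** B ** matrix_inv IV ** transpose B))))"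
  shows "(\<forall>k. 0 < alpha k \<and> alpha k < mu_hB / LSQ2 \<longrightarrow>
            (let mu_k = min (mu_fB / 2) (mu_hB - alpha k * LSQ2) in
              energy IV IQ us ps (u (Suc k)) (p (Suc k))
                \<le> 1 / (1 + alpha k * mu_k) * energy IV IQ us ps (u k) (p k)
                  + 2 * alpha k / ((1 + alpha k * mu_k) * mu_fB) * eps k))
       \<and> ((\<forall>k. alpha k = mu_hB / (2 * LSQ2)) \<longrightarrow>
            0 < rho \<and> rho < 1 \<and>
            (\<forall>N. energy IV IQ us ps (u (Suc N)) (p (Suc N))
                   \<le> rho ^ (Suc N) * energy IV IQ us ps (u 0) (p 0)
                     + mu_hB / (mu_fB * LSQ2) * (\<Sum>k\<le>N. rho ^ (N - k + 1) * eps k)))"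
  proof -
  have LSQ2_eq: "LSQ2 = L_hB^2 + L_eU^2 * lambda_max (matrix_inv IQ ** B ** matrix_inv IV ** transpose B)"
    using LSQ2_def by simp
  have step: "energy IV IQ us ps (u (Suc k)) (p (Suc k))
      \<le> 1 / (1 + alpha k * min (mu_fB / 2) (mu_hB - alpha k * LSQ2)) * energy IV IQ us ps (u k) (p k)
        + 2 * alpha k / ((1 + alpha k * min (mu_fB / 2) (mu_hB - alpha k * LSQ2)) * mu_fB) * eps k"
    if ak: "0 < alpha k" "alpha k < mu_hB / LSQ2" for k
  proof -
    obtain g where g: "(fBtilde f gh B TP IV (alpha k) (u k) (p (Suc k)) has_derivative (\<lambda>v. g \<bullet> v)) (at (u (Suc k)))"
        "(mnorm (matrix_inv IV) g)^2 \<le> eps k" using it_u[of k] by blast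
    show ?thesis
      by (rule one_step[OF f_cvx h_cvx f_grad h_grad saddle1 saddle2 spd(1) spd(2) spd(3) spd(4)
            h_S11 L_hTP f_S11 L_fTU fB_sc mu_fB hB_sc ghB L_hB L_eU it_half it_p g(1) g(2) ak LSQ2_eq])
  qed
  have part1: "\<forall>k. 0 < alpha k \<and> alpha k < mu_hB / LSQ2 \<longrightarrow>
            (let mu_k = min (mu_fB / 2) (mu_hB - alpha k * LSQ2) in
              energy IV IQ us ps (u (Suc k)) (p (Suc k))
                \<le> 1 / (1 + alpha k * mu_k) * energy IV IQ us ps (u k) (p k)
                  + 2 * alpha k / ((1 + alpha k * mu_k) * mu_fB) * eps k)"
    using step by (simp add: Let_def)
  have part2: "(\<forall>k. alpha k = mu_hB / (2 * LSQ2)) \<longrightarrow>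
            0 < rho \<and> rho < 1 \<and>
            (\<forall>N. energy IV IQ us ps (u (Suc N)) (p (Suc N))
                   \<le> rho ^ (Suc N) * energy IV IQ us ps (u 0) (p 0)
                     + mu_hB / (mu_fB * LSQ2) * (\<Sum>k\<le>N. rho ^ (N - k + 1) * eps k))"
  proof
    assume al: "\<forall>k. alpha k = mu_hB / (2 * LSQ2)"
    have Lpos: "0 < LSQ2"
      by (rule LSQ2_pos[OF spd(2) spd(4) hB_sc ghB L_hB mu_hB LSQ2_eq])
    define t where "t = mu_hB * min mu_fB mu_hB / (4 * LSQ2)"
    have rho_eq: "rho = 1 / (1 + t)" unfolding rho_def t_def LSQ2_eq ..
    have tpos: "0 < t" unfolding t_def using Lpos mu_hB mu_fB by simp
    have rho0: "0 < rho" and rho1: "rho < 1" unfolding rho_eq using tpos by simp_all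
    define al0 where "al0 = mu_hB / (2 * LSQ2)"
    have al0pos: "0 < al0" and al0lt: "al0 < mu_hB / LSQ2"
      unfolding al0_def using Lpos mu_hB by (simp_all add: field_simps)
    have mk: "al0 * min (mu_fB / 2) (mu_hB - al0 * LSQ2) = t"
    proof -
      have "mu_hB - al0 * LSQ2 = mu_hB / 2" unfolding al0_def using Lpos by simp
      moreover have "min (mu_fB / 2) (mu_hB / 2) = min mu_fB mu_hB / 2" by (simp add: min_def)
      ultimately show ?thesis unfolding al0_def t_def using Lpos by simp
    qed
    define cc where "cc = mu_hB / (mu_fB * LSQ2)"
    have c2: "2 * al0 / ((1 + t) * mu_fB) = rho * cc"
      unfolding rho_eq cc_def al0_def using Lpos mu_fB tpos by (simp add: field_simps)
    have rec: "energy IV IQ us ps (u (Suc k)) (p (Suc k)) \<le> rho * energy IV IQ us ps (u k) (p k) + rho * cc * eps k" for k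
    proof -
      have ak: "alpha k = al0" using al al0_def by simp
      have "energy IV IQ us ps (u (Suc k)) (p (Suc k))
        \<le> 1 / (1 + al0 * min (mu_fB / 2) (mu_hB - al0 * LSQ2)) * energy IV IQ us ps (u k) (p k)
        + 2 * al0 / ((1 + al0 * min (mu_fB / 2) (mu_hB - al0 * LSQ2)) * mu_fB) * eps k"
        using step[of k] ak al0pos al0lt by simp
      then show ?thesis unfolding mk c2 rho_eq[symmetric] by simp
    qed
    have ind: "energy IV IQ us ps (u (Suc N)) (p (Suc N))
                   \<le> rho ^ (Suc N) * energy IV IQ us ps (u 0) (p 0)
                     + cc * (\<Sum>k\<le>N. rho ^ (N - k + 1) * eps k)" for N
    proof (induction N)
      case 0
      then show ?case using rec[of 0] by (simp add: mult.commute mult.left_commute)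
    next
      case (Suc N)
      define E where "E n = energy IV IQ us ps (u n) (p n)" for n
      have "E (Suc (Suc N)) \<le> rho * E (Suc N) + rho * cc * eps (Suc N)" using rec unfolding E_def by blast
      also have "\<dots> \<le> rho * (rho ^ (Suc N) * E 0 + cc * (\<Sum>k\<le>N. rho ^ (N - k + 1) * eps k)) + rho * cc * eps (Suc N)"
        using Suc.IH rho0 unfolding E_def by (simp add: mult_left_mono)
      also have "\<dots> = rho ^ (Suc (Suc N)) * E 0 + cc * (\<Sum>k\<le>Suc N. rho ^ (Suc N - k + 1) * eps k)"
      proof -
        have "rho * (\<Sum>k\<le>N. rho ^ (N - k + 1) * eps k) = (\<Sum>k\<le>N. rho ^ (Suc N - k + 1) * eps k)"
          unfolding sum_distrib_left
          by (rule sum.cong) (auto simp: Suc_diff_le)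
        then show ?thesis by (simp add: algebra_simps)
      qed
      finally show ?case unfolding E_def .
    qed
    show "0 < rho \<and> rho < 1 \<and>
            (\<forall>N. energy IV IQ us ps (u (Suc N)) (p (Suc N))
                   \<le> rho ^ (Suc N) * energy IV IQ us ps (u 0) (p 0)
                     + mu_hB / (mu_fB * LSQ2) * (\<Sum>k\<le>N. rho ^ (N - k + 1) * eps k))"
      using rho0 rho1 ind unfolding cc_def by blast
  qed
  show ?thesis using part1 part2 by blast
qed

end
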